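(* Let $n \ge 19$. Let $H$ be a red-blue colouring of $K_n$ satisfying $\mathrm{pack}(H) \le n(n-1)/4$. Suppose that $\{X_1, X_2\}$ is a bipartition of $V(H)$ such that the number $k$ of blue edges with both ends in $X_1$ or both ends in $X_2$ satisfies $k \le n/8$. Then (a) $|X_i| \ge k + 4$ for $i \in [2]$, and (b) $|X_i| \ge 7$ for $i \in [2]$.
   Context: A red-blue colouring $H$ of $K_n$ assigns red or blue to each edge of the complete graph on the $n$-vertex set $V(H)$; $H_R, H_B$ are the spanning subgraphs of red and blue edges. For a graph $F$, a fractional triangle packing is a function $\omega$ from the triangles of $F$ to $[0,1]$ with $\sum_{T \ni e}\omega(T) \le 1$ for every edge $e$; $\nu^*(F)$ is the maximum of $\sum_T\omega(T)$; $\mathrm{pack}(H) = 3(\nu^*(H_R)+\nu^*(H_B))$. *)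

theory Defs
  imports Complex_Main
begin

text \<open>A red-blue colouring of K_n on V is given by its set B of blue edges
(B a subset of edges V); the red edges are edges V - B.\<close>

definition cedges :: "'a set \<Rightarrow> 'a set set" where
  "cedges V = {e. e \<subseteq> V \<and> card e = 2}"

definition triangles :: "'a set set \<Rightarrow> 'a set set" where
  "triangles E = {T. finite T \<and> card T = 3 \<and> (\<forall>e. e \<subseteq> T \<and> card e = 2 \<longrightarrow> e \<in> E)}"

definition frac_tri_packing :: "'a set set \<Rightarrow> ('a set \<Rightarrow> real) \<Rightarrow> bool" where
  "frac_tri_packing E w \<longleftrightarrow>
     (\<forall>T\<in>triangles E. 0 \<le> w T \<and> w T \<le> 1) \<and>
     (\<forall>e\<in>E. (\<Sum>T\<in>{T\<in>triangles E. e \<subseteq> T}. w T) \<le> 1)"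

text \<open>Fractional triangle packing number: maximum (supremum; it is attained)
of the total weight.\<close>
definition nu_star :: "'a set set \<Rightarrow> real" where
  "nu_star E = Sup {(\<Sum>T\<in>triangles E. w T) | w. frac_tri_packing E w}"

definition pack :: "'a set \<Rightarrow> 'a set set \<Rightarrow> real" where
  "pack V B = 3 * (nu_star (cedges V - B) + nu_star B)"

end

theory Submission
  imports Defs
begin


lemma tri_subset:
  assumes "E \<subseteq> cedges V"
  shows "triangles E \<subseteq> Pow V"
proof
  fix T assume T: "T \<in> triangles E"
  then have fin: "finite T" and c3: "card T = 3" and allE: "\<And>e. e \<subseteq> T \<Longrightarrow> card e = 2 \<Longrightarrow> e \<in> E"
    by (auto simp: triangles_def)
  show "T \<in> Pow V"
  proof (rule PowI, rule subsetI)
    fix x assume x: "x \<in> T"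
    have "card (T - {x}) = 2" using c3 x fin by simp
    then obtain y where y: "y \<in> T" "y \<noteq> x"
      by (metis Diff_iff card_0_eq ex_in_conv finite_Diff fin insert_iff zero_neq_numeral)
    have "{x, y} \<in> E" using allE[of "{x,y}"] x y by auto
    then show "x \<in> V" using assms by (auto simp: cedges_def)
  qed
qed

lemma fin_tri:
  assumes "finite V" "E \<subseteq> cedges V"
  shows "finite (triangles E)"
  using tri_subset[OF assms(2)] assms(1) by (meson finite_Pow_iff finite_subset)

lemma nu_star_ge:
  assumes "finite V" "E \<subseteq> cedges V" "frac_tri_packing E w"
  shows "(\<Sum>T\<in>triangles E. w T) \<le> nu_star E"
  unfolding nu_star_def
proof (rule cSup_upper)
  show "(\<Sum>T\<in>triangles E. w T) \<in> {(\<Sum>T\<in>triangles E. w T) | w. frac_tri_packing E w}"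
    using assms(3) by blast
  show "bdd_above {(\<Sum>T\<in>triangles E. w T) | w. frac_tri_packing E w}"
  proof (rule bdd_aboveI)
    fix x assume "x \<in> {(\<Sum>T\<in>triangles E. w T) | w. frac_tri_packing E w}"
    then obtain u where x: "x = (\<Sum>T\<in>triangles E. u T)" and u: "frac_tri_packing E u" by blast
    have "x \<le> (\<Sum>T\<in>triangles E. 1)" unfolding x
      by (rule sum_mono) (use u in \<open>auto simp: frac_tri_packing_def\<close>)
    then show "x \<le> real (card (triangles E))" by simp
  qed
qed

lemma nu_star_nonneg:
  assumes "finite V" "E \<subseteq> cedges V"
  shows "0 \<le> nu_star E"
proof -
  have "frac_tri_packing E (\<lambda>_. 0)" by (simp add: frac_tri_packing_def)
  from nu_star_ge[OF assms this] show ?thesis by simp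
qed

lemma count3:
  assumes "finite X" "e \<subseteq> X" "card e = 2"
  shows "card {T. T \<subseteq> X \<and> card T = 3 \<and> e \<subseteq> T} = card X - 2"
proof -
  have fe: "finite e" using assms finite_subset by blast
  have "bij_betw (\<lambda>x. insert x e) (X - e) {T. T \<subseteq> X \<and> card T = 3 \<and> e \<subseteq> T}"
  proof (rule bij_betwI')
    fix x y assume "x \<in> X - e" "y \<in> X - e"
    then show "(insert x e = insert y e) = (x = y)" by (metis Diff_iff insertE insertI1)
  next
    fix x assume "x \<in> X - e"
    then show "insert x e \<in> {T. T \<subseteq> X \<and> card T = 3 \<and> e \<subseteq> T}"
      using assms fe by auto
  next
    fix T assume T: "T \<in> {T. T \<subseteq> X \<and> card T = 3 \<and> e \<subseteq> T}"
    then have fT: "finite T" using assms(1) finite_subset by blast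
    have "card (T - e) = 1" using T fT fe assms(3) card_Diff_subset[of e T] by simp
    then obtain x where x: "T - e = {x}" by (meson card_1_singletonE)
    then have "T = insert x e" using T by auto
    moreover have "x \<in> X - e" using x T by auto
    ultimately show "\<exists>x\<in>X - e. T = insert x e" by blast
  qed
  then have "card {T. T \<subseteq> X \<and> card T = 3 \<and> e \<subseteq> T} = card (X - e)"
    by (simp add: bij_betw_same_card)
  also have "\<dots> = card X - 2" using assms fe by (simp add: card_Diff_subset)
  finally show ?thesis .
qed

lemma sum_if_const:
  assumes "finite S"
  shows "(\<Sum>T\<in>S. if P T then (a::real) else 0) = a * real (card {T\<in>S. P T})"
  using assms by (simp add: sum.inter_filter[symmetric])


lemma choose2: "real (t choose 2) = real t * (real t - 1) / 2"
proof (induction t)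
  case 0 then show ?case by simp
next
  case (Suc t)
  have "(Suc t choose 2) = (t choose 1) + (t choose 2)" by (simp add: numeral_2_eq_2)
  then show ?case using Suc.IH by (simp add: field_simps) 
qed
lemma choose3: "real (t choose 3) = real t * (real t - 1) * (real t - 2) / 6"
proof (induction t)
  case 0 then show ?case by simp
next
  case (Suc t)
  have "(Suc t choose 3) = (t choose 2) + (t choose 3)" by (simp add: numeral_3_eq_3 numeral_2_eq_2)
  then show ?case using Suc.IH choose2[of t] by (simp add: field_simps) 
qed

lemma part_edge:
  assumes fT: "finite (triangles E)" and fX: "finite X" and ce: "card e = 2"
  shows "(\<Sum>T\<in>{T\<in>triangles E. e \<subseteq> T}. if T \<subseteq> X then 1/(real (card X) - 2) else 0)
           \<le> (if e \<subseteq> X then 1 else 0)"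
proof -
  let ?S = "{T\<in>{T\<in>triangles E. e \<subseteq> T}. T \<subseteq> X}"
  have fin: "finite {T\<in>triangles E. e \<subseteq> T}" using fT by simp
  have eq: "(\<Sum>T\<in>{T\<in>triangles E. e \<subseteq> T}. if T \<subseteq> X then 1/(real (card X) - 2) else 0)
     = 1/(real (card X) - 2) * real (card ?S)" by (rule sum_if_const[OF fin])
  have sub: "?S \<subseteq> {T. T \<subseteq> X \<and> card T = 3 \<and> e \<subseteq> T}" by (auto simp: triangles_def)
  show ?thesis
  proof (cases "e \<subseteq> X \<and> card X \<ge> 3")
    case True
    have "card ?S \<le> card X - 2"
      using card_mono[OF _ sub] count3[OF fX _ ce] True fX by auto
    then have "real (card ?S) \<le> real (card X) - 2" using True by linarith
    moreover have "real (card X) - 2 > 0" using True by linarith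
    ultimately have "1/(real (card X) - 2) * real (card ?S) \<le> 1"
      by (simp add: divide_le_eq_1 )
    then show ?thesis using eq True by simp
  next
    case False
    have "?S = {}"
    proof (rule ccontr)
      assume "?S \<noteq> {}"
      then obtain T where T: "T \<in> ?S" by blast
      then have c: "card T = 3" "T \<subseteq> X" "e \<subseteq> T" by (auto simp: triangles_def)
      have "card X \<ge> 3" using card_mono[OF fX c(2)] c(1) by simp
      moreover have "e \<subseteq> X" using c by blast
      ultimately show False using False by blast
    qed
    then show ?thesis using eq by simp
  qed
qed

lemma part_total:
  assumes fV: "finite V" and BV: "B \<subseteq> cedges V" and XV: "X \<subseteq> V"
  shows "(\<Sum>T\<in>triangles (cedges V - B). if T \<subseteq> X then 1/(real (card X) - 2) else 0)
     \<ge> (if card X \<ge> 3 then real (card X) * (real (card X) - 1) / 6 else 0) - real (card {e\<in>B. e \<subseteq> X})"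
proof -
  let ?R = "cedges V - B"
  let ?S = "{T\<in>triangles ?R. T \<subseteq> X}"
  let ?BX = "{e\<in>B. e \<subseteq> X}"
  let ?t = "card X"
  have fX: "finite X" using fV XV finite_subset by blast
  have fT: "finite (triangles ?R)" using fin_tri[OF fV] by (auto simp: cedges_def)
  have fS: "finite ?S" using fT by simp
  have fB: "finite B" using BV fV finite_subset[of B "Pow V"] by (auto simp: cedges_def)
  have fBX: "finite ?BX" using fB by simp
  have eq: "(\<Sum>T\<in>triangles ?R. if T \<subseteq> X then 1/(real ?t - 2) else 0)
     = 1/(real ?t - 2) * real (card ?S)" by (rule sum_if_const[OF fT])
  show ?thesis
  proof (cases "?t \<ge> 3")
    case False
    have "?S = {}"
    proof (rule ccontr)
      assume "?S \<noteq> {}"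
      then obtain T where T: "T \<in> ?S" by blast
      then have c: "card T = 3" "T \<subseteq> X" by (auto simp: triangles_def)
      have "card X \<ge> 3" using card_mono[OF fX c(2)] c(1) by simp
      then show False using False by blast
    qed
    then show ?thesis using eq False by simp
  next
    case True
    have cov: "{T. T \<subseteq> X \<and> card T = 3} \<subseteq> ?S \<union> (\<Union>e\<in>?BX. {T. T \<subseteq> X \<and> card T = 3 \<and> e \<subseteq> T})"
    proof
      fix T assume T: "T \<in> {T. T \<subseteq> X \<and> card T = 3}"
      have fTT: "finite T" using T fX finite_subset by blast
      show "T \<in> ?S \<union> (\<Union>e\<in>?BX. {T. T \<subseteq> X \<and> card T = 3 \<and> e \<subseteq> T})"
      proof (cases "T \<in> triangles ?R")
        case True then show ?thesis using T by auto
      next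
        case False
        then obtain e where e: "e \<subseteq> T" "card e = 2" "e \<notin> ?R"
          using T fTT by (auto simp: triangles_def)
        then have "e \<in> cedges V" using T XV by (auto simp: cedges_def)
        then have "e \<in> B" using e by auto
        then have eB: "e \<in> ?BX" using e T by auto
        have "T \<in> {T. T \<subseteq> X \<and> card T = 3 \<and> e \<subseteq> T}" using e T by auto
        then show ?thesis using eB by blast
      qed
    qed
    have "card {T. T \<subseteq> X \<and> card T = 3} \<le> card (?S \<union> (\<Union>e\<in>?BX. {T. T \<subseteq> X \<and> card T = 3 \<and> e \<subseteq> T}))"
      by (rule card_mono[OF _ cov], rule finite_subset[of _ "Pow X"]) (use fX in auto)
    also have "\<dots> \<le> card ?S + card (\<Union>e\<in>?BX. {T. T \<subseteq> X \<and> card T = 3 \<and> e \<subseteq> T})"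
      by (rule card_Un_le)
    also have "card (\<Union>e\<in>?BX. {T. T \<subseteq> X \<and> card T = 3 \<and> e \<subseteq> T}) \<le> (\<Sum>e\<in>?BX. card {T. T \<subseteq> X \<and> card T = 3 \<and> e \<subseteq> T})"
      by (rule card_UN_le[OF fBX])
    also have "(\<Sum>e\<in>?BX. card {T. T \<subseteq> X \<and> card T = 3 \<and> e \<subseteq> T}) = (\<Sum>e\<in>?BX. ?t - 2)"
      by (rule sum.cong) (use BV count3[OF fX] in \<open>auto simp: cedges_def\<close>)
    finally have "card {T. T \<subseteq> X \<and> card T = 3} \<le> card ?S + card ?BX * (?t - 2)" by simp
    then have "?t choose 3 \<le> card ?S + card ?BX * (?t - 2)" using n_subsets[OF fX, of 3] by simp
    then have "real (?t choose 3) \<le> real (card ?S) + real (card ?BX) * (real ?t - 2)"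
    proof -
      have "real (card ?S + card ?BX * (?t-2)) = real (card ?S) + real (card ?BX) * (real ?t - 2)"
        using True by (simp add: of_nat_diff)
      then show ?thesis using \<open>?t choose 3 \<le> card ?S + card ?BX * (?t - 2)\<close>
        by (simp only: of_nat_le_iff)
    qed
    then have ineq: "real ?t * (real ?t - 1) * (real ?t - 2) / 6 \<le> real (card ?S) + real (card ?BX) * (real ?t - 2)"
      using choose3 by simp
    have pos: "real ?t - 2 > 0" using True by linarith
    have "real ?t * (real ?t - 1) / 6 - real (card ?BX) \<le> real (card ?S) / (real ?t - 2)"
      using ineq pos by (simp add: field_simps)
    then show ?thesis using eq True by simp
  qed
qed


lemma arith_core:
  fixes s m k :: nat
  assumes n19: "s + m \<ge> 19" and k8: "8 * real k \<le> real (s + m)"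
    and small: "s < 7 \<or> s < k + 4"
    and ineq: "3 * ((if s \<ge> 3 then real s * (real s - 1) / 6 else 0)
               + (if m \<ge> 3 then real m * (real m - 1) / 6 else 0) - real k)
             \<le> real (s + m) * (real (s + m) - 1) / 4"
  shows False
proof -
  define S where "S = real s"
  define M where "M = real m"
  define K where "K = real k"
  define N where "N = S + M"
  have N19: "N \<ge> 19" unfolding N_def S_def M_def using n19 by linarith
  have K8: "8 * K \<le> N" unfolding N_def S_def M_def K_def using k8 by simp
  have S0: "S \<ge> 0" "K \<ge> 0" unfolding S_def K_def by auto
  have Ssmall: "S \<le> 6 \<or> S \<le> K + 3" unfolding S_def K_def using small by linarith
  have m3: "m \<ge> 3" using small k8 n19 by linarith
  then have M3: "M \<ge> 3" unfolding M_def by simp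
  show False
  proof (cases "s \<ge> 3")
    case False
    then have S2: "S \<le> 2" unfolding S_def by simp
    have I: "3 * (M * (M - 1) / 6 - K) \<le> N * (N - 1) / 4"
      using ineq False m3 unfolding N_def S_def M_def K_def by simp
    have "M * (M - 1) \<ge> (N - 2) * (N - 3)"
      by (rule mult_mono) (use S2 S0 N19 M3 in \<open>auto simp: N_def\<close>)
    moreover have "(N - 19) * (N + 8.5) \<ge> 0" using N19 by simp
    moreover have "M*(M-1) = M*M - M" "(N-2)*(N-3) = N*N - 5*N + 6"
      "(N-19)*(N+8.5) = N*N - 10.5*N - 161.5" "N * (N - 1) = N*N - N" by (simp_all add: algebra_simps field_simps)
    ultimately show False using I K8 by argo
  next
    case True
    have I: "3 * (S * (S - 1) / 6 + M * (M - 1) / 6 - K) \<le> N * (N - 1) / 4"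
      using ineq True m3 unfolding N_def S_def M_def K_def by simp
    have h0: "(N - 19) * (N - 7.5) \<ge> 0" "(N - 19) * (N - 2) \<ge> 0" using N19 by simp_all
    show False
    proof (cases "S \<le> 6")
      case True
      have "(6 - S) * (M - 6) \<ge> 0" using True N19 S0 Ssmall K8 unfolding N_def by (intro mult_nonneg_nonneg) linarith+
      moreover have "(6 - S) * (M - 6) = 6*M - S*M - 36 + 6*S" "(N - 19) * (N - 7.5) = S*S + 2*(S*M) + M*M - 26.5*(S+M) + 142.5"
        "S * (S - 1) = S*S - S" "M * (M - 1) = M*M - M" "N * (N - 1) = S*S + 2*(S*M) + M*M - S - M"
        unfolding N_def by (simp_all add: algebra_simps field_simps)
      ultimately show False using I K8 h0 N_def by argo
    next
      case False
      define c where "c = N / 8 + 3"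
      have "(c - S) * (N - c - S) \<ge> 0" using False Ssmall K8 N19 unfolding c_def by (intro mult_nonneg_nonneg) linarith+
      moreover have "(c - S) * (N - c - S) = c*N - c*c - S*N + S*S" by (simp add: algebra_simps)
      moreover have "c*N = N*N/8 + 3*N" "c*c = N*N/64 + 3/4*N + 9" unfolding c_def by (simp_all add: algebra_simps field_simps power2_eq_square)
      moreover have "S*N = S*S + S*M" "N*N = S*S + 2*(S*M) + M*M" unfolding N_def by (simp_all add: algebra_simps)
      moreover have "(N - 19) * (N - 2) = N*N - 21*N + 38" by (simp add: algebra_simps)
      moreover have "S * (S - 1) = S*S - S" "M * (M - 1) = M*M - M" "N * (N - 1) = N*N - N"
        by (simp_all add: algebra_simps)
      ultimately have s1: "S*M \<le> 7*(N*N)/64 + 9*N/4 - 9" and s2: "N*N - N \<le> 4*(S*M) + 12*K"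
        and s3: "N*N \<ge> 21*N - 38" using I h0 N_def by argo+
      show False using s1 s2 s3 K8 N19 by linarith
    qed
  qed
qed
lemma core:
  fixes V :: "'a set" and B :: "'a set set" and X1 X2 :: "'a set" and n k :: nat
  assumes fV: "finite V" and cV: "card V = n" and n19: "n \<ge> 19"
    and BV: "B \<subseteq> cedges V"
    and pk: "pack V B \<le> real n * (real n - 1) / 4"
    and U: "X1 \<union> X2 = V" and D: "X1 \<inter> X2 = {}"
    and kdef: "k = card {e\<in>B. e \<subseteq> X1 \<or> e \<subseteq> X2}"
    and k8: "real k \<le> real n / 8"
    and small: "card X1 < 7 \<or> card X1 < k + 4"
  shows False
proof -
  let ?R = "cedges V - B"
  define s where "s = card X1"
  define m where "m = card X2"
  define a1 where "a1 = 1 / (real s - 2)"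
  define a2 where "a2 = 1 / (real m - 2)"
  define w where "w T = (if T \<subseteq> X1 then a1 else 0) + (if T \<subseteq> X2 then a2 else 0)" for T
  have X1V: "X1 \<subseteq> V" and X2V: "X2 \<subseteq> V" using U by auto
  have fX1: "finite X1" and fX2: "finite X2" using fV X1V X2V finite_subset by auto
  have RV: "?R \<subseteq> cedges V" by blast
  have fT: "finite (triangles ?R)" using fin_tri[OF fV RV] .
  have nm: "n = s + m" using card_Un_disjoint[OF fX1 fX2 D] U cV s_def m_def by simp
  have fB: "finite B" using BV fV finite_subset[of B "Pow V"] by (auto simp: cedges_def)
  have kk: "k = card {e\<in>B. e \<subseteq> X1} + card {e\<in>B. e \<subseteq> X2}"
  proof -
    have "{e\<in>B. e \<subseteq> X1 \<or> e \<subseteq> X2} = {e\<in>B. e \<subseteq> X1} \<union> {e\<in>B. e \<subseteq> X2}" by auto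
    moreover have "{e\<in>B. e \<subseteq> X1} \<inter> {e\<in>B. e \<subseteq> X2} = {}"
    proof (rule ccontr)
      assume "{e\<in>B. e \<subseteq> X1} \<inter> {e\<in>B. e \<subseteq> X2} \<noteq> {}"
      then obtain e where e: "e \<in> B" "e \<subseteq> X1" "e \<subseteq> X2" by blast
      then have "card e = 2" using BV by (auto simp: cedges_def)
      then have "e \<noteq> {}" by auto
      then show False using e D by blast
    qed
    ultimately show ?thesis using kdef card_Un_disjoint[of "{e\<in>B. e \<subseteq> X1}" "{e\<in>B. e \<subseteq> X2}"] fB by simp
  qed
  have pack_ok: "frac_tri_packing ?R w"
    unfolding frac_tri_packing_def
  proof (intro conjI ballI)
    fix T assume T: "T \<in> triangles ?R"
    then have fTT: "finite T" and c3: "card T = 3" by (auto simp: triangles_def)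
    have nb: "\<not> (T \<subseteq> X1 \<and> T \<subseteq> X2)"
    proof
      assume "T \<subseteq> X1 \<and> T \<subseteq> X2"
      then have "T = {}" using D by blast
      then show False using c3 by simp
    qed
    have h1: "T \<subseteq> X1 \<Longrightarrow> 0 \<le> a1 \<and> a1 \<le> 1"
    proof -
      assume "T \<subseteq> X1"
      then have "s \<ge> 3" using card_mono[OF fX1, of T] c3 unfolding s_def by linarith
      then have "real s - 2 \<ge> 1" by simp
      then show ?thesis unfolding a1_def by simp
    qed
    have h2: "T \<subseteq> X2 \<Longrightarrow> 0 \<le> a2 \<and> a2 \<le> 1"
    proof -
      assume "T \<subseteq> X2"
      then have "m \<ge> 3" using card_mono[OF fX2, of T] c3 unfolding m_def by linarith
      then have "real m - 2 \<ge> 1" by simp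
      then show ?thesis unfolding a2_def by simp
    qed
    show "0 \<le> w T" using h1 h2 nb unfolding w_def by auto
    show "w T \<le> 1" using h1 h2 nb unfolding w_def by auto
  next
    fix e assume e: "e \<in> ?R"
    then have ce: "card e = 2" by (auto simp: cedges_def)
    have "(\<Sum>T\<in>{T\<in>triangles ?R. e \<subseteq> T}. w T)
      = (\<Sum>T\<in>{T\<in>triangles ?R. e \<subseteq> T}. if T \<subseteq> X1 then a1 else 0)
        + (\<Sum>T\<in>{T\<in>triangles ?R. e \<subseteq> T}. if T \<subseteq> X2 then a2 else 0)"
      unfolding w_def by (rule sum.distrib)
    also have "\<dots> \<le> (if e \<subseteq> X1 then 1 else 0) + (if e \<subseteq> X2 then 1 else 0)"
      using part_edge[OF fT fX1 ce] part_edge[OF fT fX2 ce] unfolding a1_def a2_def s_def m_def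
      by (rule add_mono)
    also have "\<dots> \<le> 1"
    proof -
      have "e \<noteq> {}" using ce by auto
      then have "\<not> (e \<subseteq> X1 \<and> e \<subseteq> X2)" using D by blast
      then show ?thesis by auto
    qed
    finally show "(\<Sum>T\<in>{T\<in>triangles ?R. e \<subseteq> T}. w T) \<le> 1" .
  qed
  have tot: "(\<Sum>T\<in>triangles ?R. w T)
      = (\<Sum>T\<in>triangles ?R. if T \<subseteq> X1 then a1 else 0) + (\<Sum>T\<in>triangles ?R. if T \<subseteq> X2 then a2 else 0)"
    unfolding w_def by (rule sum.distrib)
  have lb: "(if s \<ge> 3 then real s * (real s - 1) / 6 else 0)
      + (if m \<ge> 3 then real m * (real m - 1) / 6 else 0) - real k \<le> nu_star ?R"
    using tot part_total[OF fV BV X1V] part_total[OF fV BV X2V] nu_star_ge[OF fV RV pack_ok] kk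
    unfolding a1_def a2_def s_def m_def by simp
  have "0 \<le> nu_star B" by (rule nu_star_nonneg[OF fV BV])
  then have "3 * ((if s \<ge> 3 then real s * (real s - 1) / 6 else 0)
      + (if m \<ge> 3 then real m * (real m - 1) / 6 else 0) - real k) \<le> real (s + m) * (real (s + m) - 1) / 4"
    using pk lb nm unfolding pack_def by simp
  moreover have "s + m \<ge> 19" using n19 nm by simp
  moreover have "8 * real k \<le> real (s + m)" using k8 nm by simp
  moreover have "s < 7 \<or> s < k + 4" using small s_def by simp
  ultimately show False using arith_core by blast
qed

theorem proposition4p1:
  fixes V :: "'a set" and B :: "'a set set" and X1 X2 :: "'a set" and n k :: nat
  assumes "finite V" and "card V = n" and "n \<ge> 19"
    and "B \<subseteq> cedges V"
    and "pack V B \<le> real n * (real n - 1) / 4"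
    and "X1 \<union> X2 = V" and "X1 \<inter> X2 = {}"
    and "k = card {e\<in>B. e \<subseteq> X1 \<or> e \<subseteq> X2}"
    and "real k \<le> real n / 8"
  shows "(card X1 \<ge> k + 4 \<and> card X2 \<ge> k + 4) \<and> (card X1 \<ge> 7 \<and> card X2 \<ge> 7)"
proof -
  have a: "\<not> (card X1 < 7 \<or> card X1 < k + 4)"
    using core[OF assms] by blast
  have k2: "k = card {e\<in>B. e \<subseteq> X2 \<or> e \<subseteq> X1}"
  proof -
    have "{e\<in>B. e \<subseteq> X2 \<or> e \<subseteq> X1} = {e\<in>B. e \<subseteq> X1 \<or> e \<subseteq> X2}" by blast
    then show ?thesis using assms(8) by simp
  qed
  have b: "\<not> (card X2 < 7 \<or> card X2 < k + 4)"
  proof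
    assume h: "card X2 < 7 \<or> card X2 < k + 4"
    have u: "X2 \<union> X1 = V" "X2 \<inter> X1 = {}" using assms(6,7) by blast+
    show False by (rule core[OF assms(1-5) u k2 assms(9) h])
  qed
  show ?thesis using a b by linarith
qed

end
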